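(* Let $t\in[0,T]$ and let $X\in\mathbb{L}^\infty(\mathbb{R},\mathcal{F}_T)$ be such that $X>0$ a.s. Then there exists a unique $Z_t\in\mathbb{L}^0(\mathbb{R},\mathcal{F}_t)$ with $\operatorname{ess\,sup}_{\mathcal{F}_0}(Z_t)\in\mathbb{R}$ a.s. that satisfies $$\operatorname{ess\,sup}_{\mathcal{F}_0}(Z_t1_{F_t})=\operatorname{ess\,sup}_{\mathcal{F}_0}(X1_{F_t})\quad\text{for all }F_t\in\mathcal{F}_t.$$
   Context: Let $(\Omega,\mathcal{F},\mathbb{P})$ be a complete probability space and $(\mathcal{F}_t)_{t\in[0,T]}$ a filtration of complete sub-$\sigma$-algebras of $\mathcal{F}$ ($\mathcal{F}_s\subseteq\mathcal{F}_t$ for $s\le t$). $\mathbb{L}^0(G,\mathcal{G})$ denotes the $\mathcal{G}$-measurable random variables a.s. valued in $G$ and $\mathbb{L}^\infty(G,\mathcal{G})$ the essentially bounded ones. For a sub-$\sigma$-algebra $\mathcal{G}$, $\operatorname{ess\,sup}_{\mathcal{G}}(Y)$ is the smallest (a.s.) $\mathcal{G}$-measurable $\overline{\mathbb{R}}$-valued random variable dominating $Y$ a.s. *)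

theory Defs
  imports "HOL-Probability.Probability"
begin

definition complete_msp :: "'a measure \<Rightarrow> bool" where
  "complete_msp M \<longleftrightarrow> (\<forall>A B. B \<in> null_sets M \<and> A \<subseteq> B \<longrightarrow> A \<in> sets M)"

definition complete_subalgebra :: "'a measure \<Rightarrow> 'a measure \<Rightarrow> bool" where
  "complete_subalgebra M G \<longleftrightarrow> subalgebra M G \<and> null_sets M \<subseteq> sets G"

definition is_cond_esssup :: "'a measure \<Rightarrow> 'a measure \<Rightarrow> ('a \<Rightarrow> real) \<Rightarrow> ('a \<Rightarrow> ereal) \<Rightarrow> bool" where
  "is_cond_esssup M G Y E \<longleftrightarrow>
     E \<in> borel_measurable G \<and> (AE x in M. ereal (Y x) \<le> E x) \<and>
     (\<forall>E'. E' \<in> borel_measurable G \<and> (AE x in M. ereal (Y x) \<le> E' x) \<longrightarrow> (AE x in M. E x \<le> E' x))"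

definition cond_esssup :: "'a measure \<Rightarrow> 'a measure \<Rightarrow> ('a \<Rightarrow> real) \<Rightarrow> ('a \<Rightarrow> ereal)" where
  "cond_esssup M G Y = (SOME E. is_cond_esssup M G Y E)"

end

theory Submission
  imports Defs
begin

definition fb :: "ereal \<Rightarrow> real" where
  "fb e = (if e = \<infinity> then pi/2 else if e = -\<infinity> then -pi/2 else arctan (real_of_ereal e))"

lemma fb_less: "a < b \<Longrightarrow> fb a < fb b"
  apply (cases a; cases b)
  apply (auto simp: fb_def arctan_less_iff)
  using arctan_bounded by (smt (verit) field_sum_of_halves)+

lemma fb_bound: "\<bar>fb e\<bar> \<le> pi"
  unfolding fb_def using arctan_bounded[of "real_of_ereal e"] pi_gt_zero by auto

lemma fb_meas[measurable]: "fb \<in> borel_measurable borel"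
  unfolding fb_def by measurable

lemma fb_inj: "fb a = fb b \<Longrightarrow> a = b"
  by (metis fb_less less_irrefl neqE)

lemma fb_mono: "a \<le> b \<Longrightarrow> fb a \<le> fb b"
  by (metis fb_less order_le_less)

lemma cond_esssup_exists:
  assumes P: "prob_space M" and sub: "subalgebra M G"
  shows "\<exists>E. is_cond_esssup M G Y E"
proof -
  interpret prob_space M by fact
  define S where "S = {E. E \<in> borel_measurable G \<and> (AE x in M. ereal (Y x) \<le> E x)}"
  have measM: "(\<lambda>x. fb (E x)) \<in> borel_measurable M" if "E \<in> borel_measurable G" for E
    using measurable_from_subalg[OF sub that] by measurable
  have intg: "integrable M (\<lambda>x. fb (E x))" if "E \<in> borel_measurable G" for E
    by (rule integrable_const_bound[where B=pi]) (auto simp: fb_bound measM that)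
  define I where "I E = (\<integral>x. fb (E x) \<partial>M)" for E
  have Ilow: "- pi \<le> I E" if "E \<in> borel_measurable G" for E
  proof -
    have "(\<integral>x. - pi \<partial>M) \<le> I E" unfolding I_def
      by (rule integral_mono[OF _ intg[OF that]]) (use fb_bound in \<open>auto simp: abs_le_iff minus_le_iff\<close>)
    then show ?thesis by (simp add: prob_space)
  qed
  define m where "m = Inf (I ` S)"
  have bdd: "bdd_below (I ` S)" using Ilow unfolding S_def bdd_below_def by blast
  have Sne: "(\<lambda>_. \<infinity>) \<in> S" unfolding S_def by auto
  have mle: "m \<le> I E" if "E \<in> S" for E unfolding m_def by (rule cInf_lower) (use that bdd in auto)
  have "\<exists>E. E \<in> S \<and> I E < m + 1 / (Suc n)" for n :: nat
  proof -
    have "Inf (I ` S) < m + 1 / (Suc n)" unfolding m_def by simp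
    then obtain v where "v \<in> I ` S" "v < m + 1 / (Suc n)"
      using cInf_lessD[of "I ` S"] Sne by blast
    then show ?thesis by blast
  qed
  then obtain En where En: "\<And>n. En n \<in> S \<and> I (En n) < m + 1 / (Suc n)" by metis
  define E where "E x = (INF n. En n x)" for x
  have Emeas: "E \<in> borel_measurable G" unfolding E_def
    using En unfolding S_def by (intro borel_measurable_INF) auto
  have "\<forall>n. AE x in M. ereal (Y x) \<le> En n x" using En unfolding S_def by auto
  then have "AE x in M. \<forall>n. ereal (Y x) \<le> En n x" by (simp add: AE_all_countable)
  then have EY: "AE x in M. ereal (Y x) \<le> E x" unfolding E_def
    by eventually_elim (auto intro: INF_greatest)
  have ES: "E \<in> S" using Emeas EY unfolding S_def by auto
  have IE: "I E \<le> m"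
  proof (rule field_le_epsilon)
    fix e :: real assume "0 < e"
    then obtain n :: nat where n: "1 / Suc n < e"
      by (metis nat_approx_posE)
    have "I E \<le> I (En n)" unfolding I_def
      by (rule integral_mono[OF intg[OF Emeas] intg]) (use En[of n] in \<open>auto simp: S_def E_def intro!: fb_mono INF_lower\<close>)
    then show "I E \<le> m + e" using En[of n] n by linarith
  qed
  have "AE x in M. E x \<le> E' x" if E'S: "E' \<in> S" for E'
  proof -
    define W where "W x = min (E x) (E' x)" for x
    have Wm: "W \<in> borel_measurable G" unfolding W_def using Emeas E'S unfolding S_def by (auto intro!: borel_measurable_min)
    have E'Y: "AE x in M. ereal (Y x) \<le> E' x" using E'S unfolding S_def by auto
    have "AE x in M. ereal (Y x) \<le> W x" using EY E'Y unfolding W_def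
      by eventually_elim auto
    then have "W \<in> S" using Wm unfolding S_def by auto
    then have "I E \<le> I W" using mle IE by fastforce
    then have "(\<integral>x. fb (E x) - fb (W x) \<partial>M) \<le> 0" unfolding I_def
      by (simp add: Bochner_Integration.integral_diff intg[OF Emeas] intg[OF Wm])
    moreover have "(\<integral>x. fb (E x) - fb (W x) \<partial>M) \<ge> 0"
      by (intro integral_nonneg_AE AE_I2) (auto simp: W_def intro!: fb_mono)
    ultimately have "(\<integral>x. fb (E x) - fb (W x) \<partial>M) = 0" by linarith
    then have "AE x in M. fb (E x) - fb (W x) = 0"
      by (subst (asm) integral_nonneg_eq_0_iff_AE)
         (auto simp: W_def intro!: fb_mono Bochner_Integration.integrable_diff intg Emeas Wm[unfolded W_def])
    then show ?thesis by eventually_elim (auto simp: W_def dest!: fb_inj simp del: min_def, metis min.absorb_iff1)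
  qed
  then have "is_cond_esssup M G Y E"
    unfolding is_cond_esssup_def using Emeas EY unfolding S_def by auto
  then show ?thesis by blast
qed

lemma ce_is:
  assumes "prob_space M" "subalgebra M G"
  shows "is_cond_esssup M G Y (cond_esssup M G Y)"
  unfolding cond_esssup_def by (rule someI_ex[OF cond_esssup_exists[OF assms]])

lemma ce_meas:
  assumes "prob_space M" "subalgebra M G"
  shows "cond_esssup M G Y \<in> borel_measurable G"
  using ce_is[OF assms] unfolding is_cond_esssup_def by auto

lemma ce_ge:
  assumes "prob_space M" "subalgebra M G"
  shows "AE x in M. ereal (Y x) \<le> cond_esssup M G Y x"
  using ce_is[OF assms] unfolding is_cond_esssup_def by auto

lemma ce_least:
  assumes "prob_space M" "subalgebra M G" "E' \<in> borel_measurable G" "AE x in M. ereal (Y x) \<le> E' x"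
  shows "AE x in M. cond_esssup M G Y x \<le> E' x"
  using ce_is[OF assms(1,2)] assms(3,4) unfolding is_cond_esssup_def by auto

lemma ce_le_const:
  assumes "prob_space M" "subalgebra M G" "AE x in M. x \<in> A \<longrightarrow> U x \<le> c" "0 \<le> c"
  shows "AE x in M. cond_esssup M G (\<lambda>y. U y * indicator A y) x \<le> ereal c"
proof (rule ce_least[OF assms(1,2)])
  show "AE x in M. ereal (U x * indicator A x) \<le> ereal c"
    using assms(3) by eventually_elim (use assms(4) in \<open>auto simp: indicator_def\<close>)
qed auto

lemma ce_ge_on:
  assumes "prob_space M" "subalgebra M G"
  shows "AE x in M. x \<in> A \<longrightarrow> ereal (U x) \<le> cond_esssup M G (\<lambda>y. U y * indicator A y) x"
  using ce_ge[OF assms, of "\<lambda>y. U y * indicator A y"] by eventually_elim auto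

lemma uniq_aux:
  assumes P: "prob_space M" and s0: "subalgebra M G0" and st: "subalgebra M Gt"
    and Um: "U \<in> borel_measurable Gt" and Vm: "V \<in> borel_measurable Gt"
    and Upos: "AE x in M. 0 < U x"
    and eq: "\<forall>A \<in> sets Gt. AE x in M. cond_esssup M G0 (\<lambda>y. U y * indicator A y) x
                                   = cond_esssup M G0 (\<lambda>y. V y * indicator A y) x"
  shows "AE x in M. V x \<le> U x"
proof -
  have spc: "space Gt = space M" using st unfolding subalgebra_def by auto
  have key: "AE x in M. 0 < real_of_rat p \<longrightarrow> real_of_rat p < real_of_rat q \<longrightarrow> \<not> (U x \<le> real_of_rat p \<and> real_of_rat q \<le> V x)"
    for p q
  proof (cases "0 < real_of_rat p \<and> real_of_rat p < real_of_rat q")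
    case True
    define A where "A = {x \<in> space Gt. U x \<le> real_of_rat p \<and> real_of_rat q \<le> V x}"
    have A: "A \<in> sets Gt" unfolding A_def using Um Vm by measurable
    have 1: "AE x in M. cond_esssup M G0 (\<lambda>y. U y * indicator A y) x \<le> ereal (real_of_rat p)"
      by (rule ce_le_const[OF P s0]) (use True in \<open>auto simp: A_def\<close>)
    have 2: "AE x in M. x \<in> A \<longrightarrow> ereal (V x) \<le> cond_esssup M G0 (\<lambda>y. V y * indicator A y) x"
      by (rule ce_ge_on[OF P s0])
    note 3 = eq[rule_format, OF A]
    have "AE x in M. x \<notin> A" using 1 2 3
    proof eventually_elim
      case (elim x)
      show ?case
      proof
        assume "x \<in> A"
        then have "ereal (real_of_rat q) \<le> ereal (V x)" unfolding A_def by auto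
        also have "\<dots> \<le> ereal (real_of_rat p)" using elim \<open>x \<in> A\<close> by (metis order_trans)
        finally show False using True by simp
      qed
    qed
    then show ?thesis
      by (rule AE_mp) (rule AE_I2, auto simp: A_def spc)
  qed auto
  have "AE x in M. \<forall>p q. 0 < real_of_rat p \<longrightarrow> real_of_rat p < real_of_rat q \<longrightarrow> \<not> (U x \<le> real_of_rat p \<and> real_of_rat q \<le> V x)"
    using key by (simp add: AE_all_countable)
  then show ?thesis using Upos
  proof eventually_elim
    case (elim x)
    show ?case
    proof (rule ccontr)
      assume "\<not> V x \<le> U x"
      then have "U x < V x" by simp
      obtain r1 where r1: "r1 \<in> \<rat>" "U x < r1" "r1 < V x" using Rats_dense_in_real[OF \<open>U x < V x\<close>] by blast
      obtain r2 where r2: "r2 \<in> \<rat>" "r1 < r2" "r2 < V x" using Rats_dense_in_real[OF \<open>r1 < V x\<close>] by blast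
      obtain p where p: "r1 = real_of_rat p" using r1(1) Rats_cases by blast
      obtain q where q: "r2 = real_of_rat q" using r2(1) Rats_cases by blast
      show False using elim(1)[rule_format, of p q] elim(2) p q r1 r2 by (smt (verit) zero_less_of_rat_iff)
    qed
  qed
qed

lemma pos_aux:
  assumes P: "prob_space M" and s0: "subalgebra M G0" and st: "subalgebra M Gt"
    and Um: "U \<in> borel_measurable Gt" and Xpos: "AE x in M. 0 < X x"
    and eq: "\<forall>A \<in> sets Gt. AE x in M. cond_esssup M G0 (\<lambda>y. U y * indicator A y) x
                                   = cond_esssup M G0 (\<lambda>y. X y * indicator A y) x"
  shows "AE x in M. 0 < U x"
proof -
  have spc: "space Gt = space M" using st unfolding subalgebra_def by auto
  define A where "A = {x \<in> space Gt. U x \<le> 0}"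
  have A: "A \<in> sets Gt" unfolding A_def using Um by measurable
  have 1: "AE x in M. cond_esssup M G0 (\<lambda>y. U y * indicator A y) x \<le> ereal 0"
    by (rule ce_le_const[OF P s0]) (auto simp: A_def)
  have 2: "AE x in M. x \<in> A \<longrightarrow> ereal (X x) \<le> cond_esssup M G0 (\<lambda>y. X y * indicator A y) x"
    by (rule ce_ge_on[OF P s0])
  note 3 = eq[rule_format, OF A]
  have "AE x in M. x \<notin> A" using 1 2 3 Xpos
  proof eventually_elim
    case (elim x)
    show ?case
    proof
      assume "x \<in> A"
      then have "ereal (X x) \<le> ereal 0" using elim by (metis order_trans)
      then show False using elim by simp
    qed
  qed
  then show ?thesis
    by (rule AE_mp) (rule AE_I2, auto simp: A_def spc)
qed

theorem mainTheorem18: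
  fixes M :: "'a measure" and F :: "real \<Rightarrow> 'a measure" and T t :: real and X :: "'a \<Rightarrow> real"
  assumes "prob_space M" and "complete_msp M"
    and "\<And>s. s \<in> {0..T} \<Longrightarrow> complete_subalgebra M (F s)"
    and "\<And>s r. s \<in> {0..T} \<Longrightarrow> r \<in> {0..T} \<Longrightarrow> s \<le> r \<Longrightarrow> sets (F s) \<subseteq> sets (F r)"
    and "t \<in> {0..T}"
    and "X \<in> borel_measurable (F T)" and "\<exists>C. AE x in M. \<bar>X x\<bar> \<le> C"
    and "AE x in M. X x > 0"
  shows "\<exists>Z. Z \<in> borel_measurable (F t)
           \<and> (AE x in M. cond_esssup M (F 0) Z x \<noteq> \<infinity> \<and> cond_esssup M (F 0) Z x \<noteq> -\<infinity>)
           \<and> (\<forall>A \<in> sets (F t). AE x in M.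
                cond_esssup M (F 0) (\<lambda>y. Z y * indicator A y) x = cond_esssup M (F 0) (\<lambda>y. X y * indicator A y) x)
           \<and> (\<forall>Z'. Z' \<in> borel_measurable (F t)
                 \<and> (AE x in M. cond_esssup M (F 0) Z' x \<noteq> \<infinity> \<and> cond_esssup M (F 0) Z' x \<noteq> -\<infinity>)
                 \<and> (\<forall>A \<in> sets (F t). AE x in M.
                      cond_esssup M (F 0) (\<lambda>y. Z' y * indicator A y) x = cond_esssup M (F 0) (\<lambda>y. X y * indicator A y) x)
                 \<longrightarrow> (AE x in M. Z' x = Z x))"
proof -
  have P: "prob_space M" by fact
  interpret prob_space M by fact
  have T0: "0 \<in> {0..T}" using assms(5) by auto
  have s0: "subalgebra M (F 0)" using assms(3)[OF T0] unfolding complete_subalgebra_def by auto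
  have st: "subalgebra M (F t)" using assms(3)[OF assms(5)] unfolding complete_subalgebra_def by auto
  have s0t: "subalgebra (F t) (F 0)" using assms(4)[OF T0 assms(5)] assms(5) s0 st
    unfolding subalgebra_def by auto
  obtain C where C: "AE x in M. \<bar>X x\<bar> \<le> C" using assms(7) by blast
  define Et where "Et = cond_esssup M (F t) X"
  have Etm: "Et \<in> borel_measurable (F t)" unfolding Et_def by (rule ce_meas[OF P st])
  have EtC: "AE x in M. Et x \<le> ereal C" unfolding Et_def
    by (rule ce_least[OF P st]) (use C in \<open>auto elim: AE_mp\<close>)
  have EtX: "AE x in M. ereal (X x) \<le> Et x" unfolding Et_def by (rule ce_ge[OF P st])
  define Z where "Z x = real_of_ereal (Et x)" for x
  have Zm: "Z \<in> borel_measurable (F t)" unfolding Z_def using Etm by measurable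
  have ZE: "AE x in M. ereal (Z x) = Et x \<and> X x \<le> Z x \<and> 0 < Z x \<and> Z x \<le> C"
    using EtC EtX assms(8)
  proof eventually_elim
    case (elim x)
    then have "Et x \<noteq> \<infinity>" "Et x \<noteq> -\<infinity>" by auto
    then have "ereal (Z x) = Et x" unfolding Z_def by (cases "Et x") auto
    then show ?case using elim by (metis ereal_less_eq(3) less_le_trans)
  qed
  have fin: "AE x in M. cond_esssup M (F 0) Z x \<noteq> \<infinity> \<and> cond_esssup M (F 0) Z x \<noteq> -\<infinity>"
  proof -
    have a: "AE x in M. cond_esssup M (F 0) Z x \<le> ereal C"
      by (rule ce_least[OF P s0]) (use ZE in \<open>auto elim: AE_mp\<close>)
    have b: "AE x in M. ereal (Z x) \<le> cond_esssup M (F 0) Z x" by (rule ce_ge[OF P s0])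
    show ?thesis using a b by eventually_elim auto
  qed
  have eqA: "\<forall>A \<in> sets (F t). AE x in M.
      cond_esssup M (F 0) (\<lambda>y. Z y * indicator A y) x = cond_esssup M (F 0) (\<lambda>y. X y * indicator A y) x"
  proof
    fix A assume A: "A \<in> sets (F t)"
    define E1 where "E1 = cond_esssup M (F 0) (\<lambda>y. Z y * indicator A y)"
    define E2 where "E2 = cond_esssup M (F 0) (\<lambda>y. X y * indicator A y)"
    have E1m: "E1 \<in> borel_measurable (F 0)" unfolding E1_def by (rule ce_meas[OF P s0])
    have E2m: "E2 \<in> borel_measurable (F 0)" unfolding E2_def by (rule ce_meas[OF P s0])
    have E1Z: "AE x in M. ereal (Z x * indicator A x) \<le> E1 x" unfolding E1_def by (rule ce_ge[OF P s0])
    have E2X: "AE x in M. ereal (X x * indicator A x) \<le> E2 x" unfolding E2_def by (rule ce_ge[OF P s0])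
    have le1: "AE x in M. E2 x \<le> E1 x" unfolding E2_def
    proof (rule ce_least[OF P s0 E1m])
      show "AE x in M. ereal (X x * indicator A x) \<le> E1 x" using E1Z ZE
        by eventually_elim (auto simp: indicator_def, metis ereal_less_eq(3) order_trans)
    qed
    define E'' where "E'' x = (if x \<in> A then E2 x else \<infinity>)" for x
    have E''m: "E'' \<in> borel_measurable (F t)" unfolding E''_def
      using measurable_from_subalg[OF s0t E2m] A by measurable
    have "AE x in M. Et x \<le> E'' x" unfolding Et_def
      by (rule ce_least[OF P st E''m]) (use E2X in \<open>eventually_elim, auto simp: E''_def\<close>)
    then have le2: "AE x in M. E1 x \<le> E2 x" unfolding E1_def
      using E2X ZE
    proof (intro ce_least[OF P s0 E2m], eventually_elim)
      case (elim x)
      show ?case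
      proof (cases "x \<in> A")
        case True then show ?thesis using elim by (auto simp: E''_def)
      next
        case False then show ?thesis using elim by auto
      qed
    qed
    show "AE x in M. E1 x = E2 x" using le1 le2 by eventually_elim auto
  qed
  have Zpos: "AE x in M. 0 < Z x" using ZE by auto
  show ?thesis
  proof (intro exI[of _ Z] conjI Zm fin eqA allI impI)
    fix Z' assume H: "Z' \<in> borel_measurable (F t)
                 \<and> (AE x in M. cond_esssup M (F 0) Z' x \<noteq> \<infinity> \<and> cond_esssup M (F 0) Z' x \<noteq> -\<infinity>)
                 \<and> (\<forall>A \<in> sets (F t). AE x in M.
                      cond_esssup M (F 0) (\<lambda>y. Z' y * indicator A y) x = cond_esssup M (F 0) (\<lambda>y. X y * indicator A y) x)"
    then have Z'm: "Z' \<in> borel_measurable (F t)" and eq': "\<forall>A \<in> sets (F t). AE x in M.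
                      cond_esssup M (F 0) (\<lambda>y. Z' y * indicator A y) x = cond_esssup M (F 0) (\<lambda>y. X y * indicator A y) x"
      by auto
    have Z'pos: "AE x in M. 0 < Z' x" by (rule pos_aux[OF P s0 st Z'm assms(8) eq'])
    have eqZZ': "\<forall>A \<in> sets (F t). AE x in M.
        cond_esssup M (F 0) (\<lambda>y. Z y * indicator A y) x = cond_esssup M (F 0) (\<lambda>y. Z' y * indicator A y) x"
    proof
      fix A assume "A \<in> sets (F t)"
      show "AE x in M. cond_esssup M (F 0) (\<lambda>y. Z y * indicator A y) x = cond_esssup M (F 0) (\<lambda>y. Z' y * indicator A y) x"
        using eqA[rule_format, OF \<open>A \<in> sets (F t)\<close>] eq'[rule_format, OF \<open>A \<in> sets (F t)\<close>]
        by eventually_elim auto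
    qed
    have eqZ'Z: "\<forall>A \<in> sets (F t). AE x in M.
        cond_esssup M (F 0) (\<lambda>y. Z' y * indicator A y) x = cond_esssup M (F 0) (\<lambda>y. Z y * indicator A y) x"
      using eqZZ' by (auto elim: AE_mp)
    have "AE x in M. Z' x \<le> Z x" by (rule uniq_aux[OF P s0 st Zm Z'm Zpos eqZZ'])
    moreover have "AE x in M. Z x \<le> Z' x" by (rule uniq_aux[OF P s0 st Z'm Zm Z'pos eqZ'Z])
    ultimately show "AE x in M. Z' x = Z x" by eventually_elim auto
  qed
qed

end
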